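(* Let $A$ be a linear matrix. Then $A$ is balanced if and only if $A$ does not contain any submatrix congruent to $C_3$ and $G_A$ is a diamond-free graph that contains neither an odd hole nor an HOH-free multisun as an induced subgraph.
   Context: A $\{0,1\}$-matrix is linear if it has no $2\times2$ submatrix with all entries $1$; it is balanced if it has no square submatrix of odd order with exactly two 1's in every row and column. Matrices are congruent if one is obtained from the other by permuting rows and columns; $C_3$ is the $3\times3$ matrix with $c_{i,j}=1$ iff $j\in\{i,i+1\}$ mod $3$. The intersection graph $G_A$ has the columns of $A$ as vertices, two being adjacent iff they are non-orthogonal. A graph is diamond-free if it has no induced $K_4$ minus an edge; an odd hole is an induced cycle of odd length at least $5$. A multisun is a diamond-free graph $G$ of odd order whose maximal cliques of size $2$ form the edge set of a Hamiltonian cycle $C$ (the rim); the other maximal cliques consist of pairwise nonconsecutive vertices of $C$ (inscribed cliques). A sub-multisun is obtained by deleting the edge sets of some, but not all, inscribed cliques. A multisun is HOH-free if neither it nor any of its sub-multisuns contains an odd hole as an induced subgraph. *)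

theory Defs
  imports Main
begin

text \<open>A {0,1}-matrix is given by a finite set R of row indices, a finite set C
of column indices and an entry function A (True = 1, False = 0).\<close>

definition linear_matrix :: "'r set \<Rightarrow> 'c set \<Rightarrow> ('r \<Rightarrow> 'c \<Rightarrow> bool) \<Rightarrow> bool" where
  "linear_matrix R C A \<longleftrightarrow>
     \<not> (\<exists>r1\<in>R. \<exists>r2\<in>R. \<exists>c1\<in>C. \<exists>c2\<in>C. r1 \<noteq> r2 \<and> c1 \<noteq> c2 \<and>
            A r1 c1 \<and> A r1 c2 \<and> A r2 c1 \<and> A r2 c2)"

definition balanced :: "'r set \<Rightarrow> 'c set \<Rightarrow> ('r \<Rightarrow> 'c \<Rightarrow> bool) \<Rightarrow> bool" where
  "balanced R C A \<longleftrightarrow>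
     \<not> (\<exists>R' C'. R' \<subseteq> R \<and> C' \<subseteq> C \<and> card R' = card C' \<and> odd (card R') \<and>
            (\<forall>r\<in>R'. card {c\<in>C'. A r c} = 2) \<and>
            (\<forall>c\<in>C'. card {r\<in>R'. A r c} = 2))"

definition C3 :: "nat \<Rightarrow> nat \<Rightarrow> bool" where
  "C3 i j \<longleftrightarrow> j = i \<or> j = (i + 1) mod 3"

definition contains_C3 :: "'r set \<Rightarrow> 'c set \<Rightarrow> ('r \<Rightarrow> 'c \<Rightarrow> bool) \<Rightarrow> bool" where
  "contains_C3 R C A \<longleftrightarrow>
     (\<exists>f g. inj_on f {0..<3} \<and> inj_on g {0..<3} \<and>
            f ` {0..<3} \<subseteq> R \<and> g ` {0..<3} \<subseteq> C \<and>
            (\<forall>i<3. \<forall>j<3. A (f i) (g j) \<longleftrightarrow> C3 i j))"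

definition GA :: "'r set \<Rightarrow> ('r \<Rightarrow> 'c \<Rightarrow> bool) \<Rightarrow> 'c \<Rightarrow> 'c \<Rightarrow> bool" where
  "GA R A c c' \<longleftrightarrow> c \<noteq> c' \<and> (\<exists>r\<in>R. A r c \<and> A r c')"

text \<open>A graph is a vertex set V with a (symmetric, irreflexive) adjacency
relation E; all notions are relativised to V, so the induced subgraph on
S \<subseteq> V is simply (S, E).\<close>

definition diamond_free :: "'v set \<Rightarrow> ('v \<Rightarrow> 'v \<Rightarrow> bool) \<Rightarrow> bool" where
  "diamond_free V E \<longleftrightarrow>
     \<not> (\<exists>a\<in>V. \<exists>b\<in>V. \<exists>c\<in>V. \<exists>d\<in>V. distinct [a, b, c, d] \<and>
            E a b \<and> E a c \<and> E a d \<and> E b c \<and> E b d \<and> \<not> E c d)"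

definition induced_cycle :: "('v \<Rightarrow> 'v \<Rightarrow> bool) \<Rightarrow> 'v list \<Rightarrow> bool" where
  "induced_cycle E vs \<longleftrightarrow> length vs \<ge> 3 \<and> distinct vs \<and>
     (\<forall>i<length vs. \<forall>j<length vs.
        E (vs ! i) (vs ! j) \<longleftrightarrow> (j = (i + 1) mod length vs \<or> i = (j + 1) mod length vs))"

definition has_odd_hole :: "'v set \<Rightarrow> ('v \<Rightarrow> 'v \<Rightarrow> bool) \<Rightarrow> bool" where
  "has_odd_hole V E \<longleftrightarrow>
     (\<exists>vs. set vs \<subseteq> V \<and> induced_cycle E vs \<and> odd (length vs) \<and> length vs \<ge> 5)"

definition clique :: "('v \<Rightarrow> 'v \<Rightarrow> bool) \<Rightarrow> 'v set \<Rightarrow> bool" where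
  "clique E K \<longleftrightarrow> (\<forall>u\<in>K. \<forall>v\<in>K. u \<noteq> v \<longrightarrow> E u v)"

definition maximal_clique :: "'v set \<Rightarrow> ('v \<Rightarrow> 'v \<Rightarrow> bool) \<Rightarrow> 'v set \<Rightarrow> bool" where
  "maximal_clique V E K \<longleftrightarrow> K \<subseteq> V \<and> clique E K \<and>
     (\<forall>v\<in>V - K. \<not> clique E (insert v K))"

definition consecutive :: "'v list \<Rightarrow> 'v \<Rightarrow> 'v \<Rightarrow> bool" where
  "consecutive vs u v \<longleftrightarrow>
     (\<exists>i<length vs. {u, v} = {vs ! i, vs ! ((i + 1) mod length vs)})"

definition multisun_rim :: "'v set \<Rightarrow> ('v \<Rightarrow> 'v \<Rightarrow> bool) \<Rightarrow> 'v list \<Rightarrow> bool" where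
  "multisun_rim V E vs \<longleftrightarrow>
     finite V \<and> odd (card V) \<and> diamond_free V E \<and>
     distinct vs \<and> set vs = V \<and> length vs \<ge> 3 \<and>
     {K. maximal_clique V E K \<and> card K = 2} =
       {{vs ! i, vs ! ((i + 1) mod length vs)} | i. i < length vs} \<and>
     (\<forall>K. maximal_clique V E K \<and> card K \<noteq> 2 \<longrightarrow>
        (\<forall>u\<in>K. \<forall>v\<in>K. u \<noteq> v \<longrightarrow> \<not> consecutive vs u v))"

definition multisun :: "'v set \<Rightarrow> ('v \<Rightarrow> 'v \<Rightarrow> bool) \<Rightarrow> bool" where
  "multisun V E \<longleftrightarrow> (\<exists>vs. multisun_rim V E vs)"

definition inscribed_cliques :: "'v set \<Rightarrow> ('v \<Rightarrow> 'v \<Rightarrow> bool) \<Rightarrow> 'v set set" where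
  "inscribed_cliques V E = {K. maximal_clique V E K \<and> card K \<noteq> 2}"

definition delete_cliques :: "('v \<Rightarrow> 'v \<Rightarrow> bool) \<Rightarrow> 'v set set \<Rightarrow> 'v \<Rightarrow> 'v \<Rightarrow> bool" where
  "delete_cliques E S u v \<longleftrightarrow> E u v \<and> \<not> (\<exists>K\<in>S. u \<in> K \<and> v \<in> K)"

text \<open>HOH-free multisun: neither the multisun (S = {}) nor any sub-multisun
(S a nonempty proper subset of the inscribed cliques) has an odd hole.\<close>
definition HOH_free_multisun :: "'v set \<Rightarrow> ('v \<Rightarrow> 'v \<Rightarrow> bool) \<Rightarrow> bool" where
  "HOH_free_multisun V E \<longleftrightarrow> multisun V E \<and>
     (\<forall>S. S \<subset> inscribed_cliques V E \<longrightarrow> \<not> has_odd_hole V (delete_cliques E S))"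

end

theory Submission
  imports Defs
begin

lemma suc_mod_eq: "i < n \<Longrightarrow> Suc i mod n = (if Suc i = n then 0 else Suc i)"
  by (auto simp: mod_less)

lemma mod_lt3: "(3::nat) \<le> n \<Longrightarrow> x mod n < n"
proof -
  assume "3 \<le> n" then have "0 < n" by linarith
  then show ?thesis by simp
qed

lemma pred_mod_eq: "(j::nat) < n \<Longrightarrow> (j + n - 1) mod n = (if j = 0 then n - 1 else j - 1)"
proof (cases "j = 0")
  case False
  assume "j < n"
  then have eq: "j + n - 1 = (j - 1) + n" using False by arith
  have "(j + n - 1) mod n = ((j - 1) + n) mod n" by (simp only: eq)
  also have "\<dots> = (j - 1) mod n" by simp
  also have "\<dots> = j - 1" using \<open>j < n\<close> by simp
  finally show ?thesis using False by simp
qed simp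

definition cyc :: "('r \<Rightarrow> 'c \<Rightarrow> bool) \<Rightarrow> 'r list \<Rightarrow> 'c list \<Rightarrow> bool" where
  "cyc A rs cs \<longleftrightarrow> length rs = length cs \<and> 3 \<le> length cs \<and> distinct rs \<and> distinct cs \<and>
     (\<forall>i<length cs. {c \<in> set cs. A (rs!i) c} = {cs!i, cs!(Suc i mod length cs)})"

lemma cyc_row_card:
  assumes "cyc A rs cs" "r \<in> set rs"
  shows "card {c \<in> set cs. A r c} = 2"
proof -
  from assms obtain i where i: "i < length cs" "r = rs!i"
    unfolding cyc_def by (metis in_set_conv_nth)
  have d: "distinct cs" "3 \<le> length cs" using assms(1) unfolding cyc_def by auto
  have "i \<noteq> Suc i mod length cs" using d i by (simp add: suc_mod_eq)
  moreover have "Suc i mod length cs < length cs" using d by (simp add: mod_lt3)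
  ultimately have "cs!i \<noteq> cs!(Suc i mod length cs)"
    using d i by (simp add: nth_eq_iff_index_eq)
  moreover have "{c \<in> set cs. A r c} = {cs!i, cs!(Suc i mod length cs)}"
    using assms(1) i unfolding cyc_def by auto
  ultimately show ?thesis by simp
qed

lemma cyc_col:
  assumes "cyc A rs cs" "j < length cs"
  shows "{r \<in> set rs. A r (cs!j)} = {rs!j, rs!((j + length cs - 1) mod length cs)}"
proof -
  let ?n = "length cs"
  have c: "length rs = ?n" "3 \<le> ?n" "distinct rs" "distinct cs"
    "\<And>i. i < ?n \<Longrightarrow> {c \<in> set cs. A (rs!i) c} = {cs!i, cs!(Suc i mod ?n)}"
    using assms(1) unfolding cyc_def by auto
  have key: "A (rs!i) (cs!j) \<longleftrightarrow> (i = j \<or> i = (j + ?n - 1) mod ?n)" if "i < ?n" for i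
  proof -
    have jin: "cs!j \<in> set cs" using assms(2) by simp
    have "A (rs!i) (cs!j) \<longleftrightarrow> cs!j \<in> {c \<in> set cs. A (rs!i) c}" using jin by blast
    also have "\<dots> \<longleftrightarrow> cs!j \<in> {cs!i, cs!(Suc i mod ?n)}" by (simp only: c(5)[OF that])
    also have "\<dots> \<longleftrightarrow> (j = i \<or> j = Suc i mod ?n)"
    proof -
      have "Suc i mod ?n < ?n" using c(2) by (simp add: mod_lt3)
      then show ?thesis using c(4) that assms(2) by (simp add: nth_eq_iff_index_eq)
    qed
    also have "\<dots> \<longleftrightarrow> (i = j \<or> i = (j + ?n - 1) mod ?n)"
      unfolding suc_mod_eq[OF that] pred_mod_eq[OF assms(2)]
      using that assms(2) c(2) by (cases "j = 0"; cases "Suc i = ?n"; simp; arith)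
    finally show ?thesis .
  qed
  have pm: "(j + ?n - 1) mod ?n < ?n" using c(2) by (simp add: mod_lt3)
  show ?thesis
  proof (rule set_eqI, rule iffI)
    fix r assume "r \<in> {r \<in> set rs. A r (cs!j)}"
    then obtain i where i: "i < ?n" "r = rs!i" "A (rs!i) (cs!j)" using c(1) by (metis (no_types, lifting) in_set_conv_nth mem_Collect_eq)
    then have "i = j \<or> i = (j + ?n - 1) mod ?n" using key by blast
    then show "r \<in> {rs!j, rs!((j + ?n - 1) mod ?n)}" using i by blast
  next
    fix r assume r: "r \<in> {rs!j, rs!((j + ?n - 1) mod ?n)}"
    have "A (rs!j) (cs!j)" using key[OF assms(2)] by simp
    moreover have "A (rs!((j + ?n - 1) mod ?n)) (cs!j)" using key[OF pm] by simp
    moreover have "rs!j \<in> set rs" "rs!((j + ?n - 1) mod ?n) \<in> set rs" using pm assms(2) c(1) by auto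
    ultimately show "r \<in> {r \<in> set rs. A r (cs!j)}" using r by blast
  qed
qed

lemma cyc_col_card:
  assumes "cyc A rs cs" "c \<in> set cs"
  shows "card {r \<in> set rs. A r c} = 2"
proof -
  from assms obtain j where j: "j < length cs" "c = cs!j" by (metis in_set_conv_nth)
  have c: "length rs = length cs" "3 \<le> length cs" "distinct rs"
    using assms(1) unfolding cyc_def by auto
  have "j \<noteq> (j + length cs - 1) mod length cs"
    using j c(2) unfolding pred_mod_eq[OF j(1)] by auto
  moreover have "(j + length cs - 1) mod length cs < length rs" using c by (simp add: mod_lt3)
  ultimately have "rs!j \<noteq> rs!((j + length cs - 1) mod length cs)"
    using c j by (simp add: nth_eq_iff_index_eq)
  then show ?thesis using cyc_col[OF assms(1) j(1)] j by simp
qed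

lemma cyc_unbalanced:
  assumes "cyc A rs cs" "odd (length cs)" "set rs \<subseteq> R" "set cs \<subseteq> C"
  shows "\<not> balanced R C A"
  unfolding balanced_def
proof (rule notI, elim notE, intro exI conjI)
  show "set rs \<subseteq> R" "set cs \<subseteq> C" by fact+
  show "card (set rs) = card (set cs)" "odd (card (set rs))"
    using assms(1,2) unfolding cyc_def by (auto simp: distinct_card)
  show "\<forall>r\<in>set rs. card {c \<in> set cs. A r c} = 2" using cyc_row_card[OF assms(1)] by auto
  show "\<forall>c\<in>set cs. card {r \<in> set rs. A r c} = 2" using cyc_col_card[OF assms(1)] by auto
qed

lemma suc_mod_cases: "i < m \<Longrightarrow> (Suc i < m \<and> Suc i mod m = Suc i) \<or> (Suc i = m \<and> Suc i mod m = 0)"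
proof (cases "Suc i < m")
  case False
  assume "i < m"
  then have "Suc i = m" using False by simp
  then show ?thesis by simp
qed simp

lemma pair_idx_aux:
  fixes l l' m sl sl' :: nat
  assumes "3 \<le> m" "(Suc l < m \<and> sl = Suc l) \<or> (Suc l = m \<and> sl = 0)"
    "(Suc l' < m \<and> sl' = Suc l') \<or> (Suc l' = m \<and> sl' = 0)" "l = sl'" "l' = sl"
  shows False
  using assms by presburger

lemma pair_idx:
  assumes "(3::nat) \<le> m" "l < m" "l' < m" "{l, Suc l mod m} = {l', Suc l' mod m}"
  shows "l = l'"
proof (rule ccontr)
  assume ne: "l \<noteq> l'"
  then have "l = Suc l' mod m" "l' = Suc l mod m" using assms(4) by (auto simp: doubleton_eq_iff)
  then show False
    by (rule pair_idx_aux[OF assms(1) suc_mod_cases[OF assms(2)] suc_mod_cases[OF assms(3)]])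
qed

lemma cyc_of_rows:
  assumes "distinct vs" "3 \<le> length vs"
    "\<forall>l<length vs. {c \<in> set vs. A (\<rho> l) c} = {vs!l, vs!(Suc l mod length vs)}"
  shows "cyc A (map \<rho> [0..<length vs]) vs"
proof -
  let ?m = "length vs"
  have inj: "inj_on \<rho> {0..<?m}"
  proof (rule inj_onI)
    fix l l' assume l: "l \<in> {0..<?m}" "l' \<in> {0..<?m}" "\<rho> l = \<rho> l'"
    have "{vs!l, vs!(Suc l mod ?m)} = {vs!l', vs!(Suc l' mod ?m)}"
      using assms(3) l by (metis atLeastLessThan_iff)
    then have im: "(!) vs ` {l, Suc l mod ?m} = (!) vs ` {l', Suc l' mod ?m}" by simp
    have ij: "inj_on ((!) vs) {..<?m}" using assms(1) by (simp add: inj_on_nth)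
    have s1: "{l, Suc l mod ?m} \<subseteq> {..<?m}" "{l', Suc l' mod ?m} \<subseteq> {..<?m}"
      using l assms(2) by (auto simp: mod_lt3)
    have "{l, Suc l mod ?m} = {l', Suc l' mod ?m}" using inj_on_image_eq_iff[OF ij s1] im by simp
    then show "l = l'" using pair_idx[OF assms(2)] l by auto
  qed
  show ?thesis unfolding cyc_def
    using assms inj by (auto simp: distinct_map)
qed

lemma idx_tri_aux:
  fixes a b c m sa sb sc :: nat
  assumes "4 \<le> m" "(Suc a < m \<and> sa = Suc a) \<or> (Suc a = m \<and> sa = 0)"
    "(Suc b < m \<and> sb = Suc b) \<or> (Suc b = m \<and> sb = 0)"
    "(Suc c < m \<and> sc = Suc c) \<or> (Suc c = m \<and> sc = 0)"
    "a \<noteq> b" "a \<noteq> c" "b \<noteq> c"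
    "b = sa \<or> a = sb" "c = sa \<or> a = sc" "c = sb \<or> b = sc"
  shows False
  using assms by presburger

lemma idx_tri:
  assumes "(4::nat) \<le> m" "a < m" "b < m" "c < m" "a \<noteq> b" "a \<noteq> c" "b \<noteq> c"
    "b = Suc a mod m \<or> a = Suc b mod m" "c = Suc a mod m \<or> a = Suc c mod m"
    "c = Suc b mod m \<or> b = Suc c mod m"
  shows False
  using idx_tri_aux[OF assms(1) suc_mod_cases[OF assms(2)] suc_mod_cases[OF assms(3)]
      suc_mod_cases[OF assms(4)] assms(5-10)] .

lemma induced_cycle_adj:
  assumes "induced_cycle E vs" "i < length vs" "j < length vs"
  shows "E (vs!i) (vs!j) \<longleftrightarrow> (j = Suc i mod length vs \<or> i = Suc j mod length vs)"
  using assms unfolding induced_cycle_def by auto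

lemma hole_no_tri:
  assumes "induced_cycle E vs" "4 \<le> length vs" "a < length vs" "b < length vs" "c < length vs"
    "a \<noteq> b" "a \<noteq> c" "b \<noteq> c"
    "E (vs!a) (vs!b)" "E (vs!a) (vs!c)" "E (vs!b) (vs!c)"
  shows False
  using idx_tri[OF assms(2-8)] induced_cycle_adj[OF assms(1)] assms by metis

lemma hole_cyc:
  assumes ic: "induced_cycle E vs" and m4: "4 \<le> length vs"
    and rows: "\<forall>l<length vs. A (\<rho> l) (vs!l) \<and> A (\<rho> l) (vs!(Suc l mod length vs))"
    and ext: "\<forall>l<length vs. \<forall>t<length vs. A (\<rho> l) (vs!t) \<longrightarrow> t \<noteq> l \<longrightarrow> t \<noteq> Suc l mod length vs
               \<longrightarrow> E (vs!l) (vs!t) \<and> E (vs!(Suc l mod length vs)) (vs!t)"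
  shows "cyc A (map \<rho> [0..<length vs]) vs"
proof (rule cyc_of_rows)
  let ?m = "length vs"
  show d: "distinct vs" using ic unfolding induced_cycle_def by simp
  show "3 \<le> ?m" using m4 by simp
  show "\<forall>l<?m. {c \<in> set vs. A (\<rho> l) c} = {vs!l, vs!(Suc l mod ?m)}"
  proof (intro allI impI)
    fix l assume l: "l < ?m"
    have sl: "Suc l mod ?m < ?m" using m4 by (simp add: mod_lt3)
    have nl: "l \<noteq> Suc l mod ?m" using l m4 unfolding suc_mod_eq[OF l] by auto
    have "c \<in> {vs!l, vs!(Suc l mod ?m)}" if c: "c \<in> set vs" "A (\<rho> l) c" for c
    proof (rule ccontr)
      assume nc: "c \<notin> {vs!l, vs!(Suc l mod ?m)}"
      obtain t where t: "t < ?m" "c = vs!t" using c by (metis in_set_conv_nth)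
      have "t \<noteq> l" "t \<noteq> Suc l mod ?m" using nc t by auto
      then have "E (vs!l) (vs!t) \<and> E (vs!(Suc l mod ?m)) (vs!t)" using ext l t c by auto
      moreover have "E (vs!l) (vs!(Suc l mod ?m))" using induced_cycle_adj[OF ic l sl] by simp
      ultimately show False using hole_no_tri[OF ic m4 l sl t(1) nl] \<open>t \<noteq> l\<close> \<open>t \<noteq> Suc l mod ?m\<close> by auto
    qed
    moreover have "vs!l \<in> set vs" "vs!(Suc l mod ?m) \<in> set vs" using l sl by auto
    ultimately show "{c \<in> set vs. A (\<rho> l) c} = {vs!l, vs!(Suc l mod ?m)}" using rows l by auto
  qed
qed

lemma lin_uniq:
  assumes "linear_matrix R C A" "r \<in> R" "r' \<in> R" "c \<in> C" "c' \<in> C" "c \<noteq> c'"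
    "A r c" "A r c'" "A r' c" "A r' c'"
  shows "r = r'"
  using assms unfolding linear_matrix_def by blast

lemma all_less_3: "(\<forall>i<(3::nat). P i) \<longleftrightarrow> P 0 \<and> P 1 \<and> P 2"
  by (auto simp: less_Suc_eq numeral_3_eq_3 numeral_2_eq_2)

lemma tri_C3:
  assumes lin: "linear_matrix R C A" and C: "a \<in> C" "b \<in> C" "x \<in> C"
    and d: "a \<noteq> b" "a \<noteq> x" "b \<noteq> x"
    and r: "r \<in> R" "A r a" "A r b" "\<not> A r x"
    and ax: "GA R A a x" and bx: "GA R A b x"
  shows "contains_C3 R C A"
proof -
  obtain r1 where r1: "r1 \<in> R" "A r1 a" "A r1 x" using ax unfolding GA_def by blast
  obtain r2 where r2: "r2 \<in> R" "A r2 b" "A r2 x" using bx unfolding GA_def by blast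
  have n1: "\<not> A r1 b"
  proof
    assume "A r1 b"
    then have "r = r1" using lin_uniq[OF lin r(1) r1(1) C(1,2) d(1) r(2,3) r1(2)] by simp
    then show False using r r1 by simp
  qed
  have n2: "\<not> A r2 a"
  proof
    assume "A r2 a"
    then have "r = r2" using lin_uniq[OF lin r(1) r2(1) C(1,2) d(1) r(2,3)] r2(2) by simp
    then show False using r r2 by simp
  qed
  define f where "f i = [r, r2, r1] ! i" for i
  define g where "g i = [a, b, x] ! i" for i
  have dr: "distinct [r, r2, r1]" using r r1 r2 n1 n2 by auto
  have dc: "distinct [a, b, x]" using d by auto
  show ?thesis unfolding contains_C3_def
  proof (intro exI conjI)
    show "inj_on f {0..<3}" unfolding f_def using inj_on_nth[OF dr, of "{0..<3}"] by simp
    show "inj_on g {0..<3}" unfolding g_def using inj_on_nth[OF dc, of "{0..<3}"] by simp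
    show "f ` {0..<3} \<subseteq> R" unfolding f_def using r r1 r2
      by (auto simp: less_Suc_eq numeral_3_eq_3 numeral_2_eq_2)
    show "g ` {0..<3} \<subseteq> C" unfolding g_def using C
      by (auto simp: less_Suc_eq numeral_3_eq_3 numeral_2_eq_2)
    show "\<forall>i<3. \<forall>j<3. A (f i) (g j) = C3 i j"
      unfolding all_less_3 f_def g_def C3_def using r r1 r2 n1 n2 by simp
  qed
qed

lemma C3_cyc:
  assumes "contains_C3 R C A"
  shows "\<exists>rs cs. cyc A rs cs \<and> odd (length cs) \<and> set rs \<subseteq> R \<and> set cs \<subseteq> C"
proof -
  obtain f g where fg0: "inj_on f {0..<3} \<and> inj_on g {0..<3} \<and> f ` {0..<3} \<subseteq> R \<and>
    g ` {0..<3} \<subseteq> C \<and> (\<forall>i<3. \<forall>j<3. A (f i) (g j) \<longleftrightarrow> C3 i j)"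
    using assms unfolding contains_C3_def by (elim exE) (erule that)
  note fg = conjunct1[OF fg0] conjunct1[OF conjunct2[OF fg0]] conjunct1[OF conjunct2[OF conjunct2[OF fg0]]]
    conjunct1[OF conjunct2[OF conjunct2[OF conjunct2[OF fg0]]]] conjunct2[OF conjunct2[OF conjunct2[OF conjunct2[OF fg0]]]]
  define vs where "vs = map g [0..<3]"
  have lv: "length vs = 3" unfolding vs_def by simp
  have dv: "distinct vs" unfolding vs_def using fg(2) by (simp add: distinct_map)
  have sv: "set vs = {g 0, g 1, g 2}" unfolding vs_def by (auto simp: numeral_3_eq_3 numeral_2_eq_2 upt_rec)
  have tab: "A (f 0) (g 0)" "A (f 0) (g 1)" "\<not> A (f 0) (g 2)"
    "\<not> A (f 1) (g 0)" "A (f 1) (g 1)" "A (f 1) (g 2)"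
    "A (f 2) (g 0)" "\<not> A (f 2) (g 1)" "A (f 2) (g 2)"
    using fg(5) unfolding all_less_3 C3_def by simp_all
  have "cyc A (map f [0..<length vs]) vs"
  proof (rule cyc_of_rows[OF dv])
    show "3 \<le> length vs" using lv by simp
    show "\<forall>l<length vs. {c \<in> set vs. A (f l) c} = {vs ! l, vs ! (Suc l mod length vs)}"
      unfolding lv all_less_3 sv unfolding vs_def using tab by (auto simp: numeral_2_eq_2)
  qed
  moreover have "set (map f [0..<length vs]) \<subseteq> R" using fg(3) lv by auto
  moreover have "set vs \<subseteq> C" using fg(4) unfolding vs_def by auto
  ultimately show ?thesis using lv by fastforce
qed

lemma C3_unbalanced: "contains_C3 R C A \<Longrightarrow> \<not> balanced R C A"
  using C3_cyc cyc_unbalanced by metis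

lemma hole_unbalanced:
  assumes "has_odd_hole C (GA R A)"
  shows "\<not> balanced R C A"
proof -
  obtain vs where vs: "set vs \<subseteq> C" "induced_cycle (GA R A) vs" "odd (length vs)" "5 \<le> length vs"
    using assms unfolding has_odd_hole_def by blast
  let ?m = "length vs"
  have dv: "distinct vs" using vs(2) unfolding induced_cycle_def by simp
  have "\<forall>l<?m. \<exists>r. r \<in> R \<and> A r (vs!l) \<and> A r (vs!(Suc l mod ?m))"
  proof (intro allI impI)
    fix l assume l: "l < ?m"
    have sl: "Suc l mod ?m < ?m" using vs(4) by (simp add: mod_lt3)
    have "GA R A (vs!l) (vs!(Suc l mod ?m))" using induced_cycle_adj[OF vs(2) l sl] by simp
    then show "\<exists>r. r \<in> R \<and> A r (vs!l) \<and> A r (vs!(Suc l mod ?m))" unfolding GA_def by blast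
  qed
  then obtain \<rho> where \<rho>: "\<forall>l<?m. \<rho> l \<in> R \<and> A (\<rho> l) (vs!l) \<and> A (\<rho> l) (vs!(Suc l mod ?m))"
    by metis
  have "cyc A (map \<rho> [0..<?m]) vs"
  proof (rule hole_cyc[OF vs(2)])
    show "4 \<le> ?m" using vs(4) by simp
    show "\<forall>l<?m. A (\<rho> l) (vs!l) \<and> A (\<rho> l) (vs!(Suc l mod ?m))" using \<rho> by blast
    show "\<forall>l<?m. \<forall>t<?m. A (\<rho> l) (vs!t) \<longrightarrow> t \<noteq> l \<longrightarrow> t \<noteq> Suc l mod ?m
               \<longrightarrow> GA R A (vs!l) (vs!t) \<and> GA R A (vs!(Suc l mod ?m)) (vs!t)"
    proof (intro allI impI)
      fix l t assume lt: "l < ?m" "t < ?m" "A (\<rho> l) (vs!t)" "t \<noteq> l" "t \<noteq> Suc l mod ?m"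
      have sl: "Suc l mod ?m < ?m" using vs(4) by (simp add: mod_lt3)
      have "vs!l \<noteq> vs!t" "vs!(Suc l mod ?m) \<noteq> vs!t" using lt sl dv by (auto simp: nth_eq_iff_index_eq)
      then show "GA R A (vs!l) (vs!t) \<and> GA R A (vs!(Suc l mod ?m)) (vs!t)"
        unfolding GA_def using \<rho> lt by blast
    qed
  qed
  moreover have "set (map \<rho> [0..<?m]) \<subseteq> R" using \<rho> by auto
  ultimately show ?thesis using cyc_unbalanced vs(1,3) by blast
qed

lemma multisun_unbalanced:
  assumes "S \<subseteq> C" "multisun S (GA R A)"
  shows "\<not> balanced R C A"
proof -
  obtain vs where ms: "multisun_rim S (GA R A) vs" using assms(2) unfolding multisun_def by blast
  let ?m = "length vs"
  let ?E = "GA R A"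
  have dv: "distinct vs" and sv: "set vs = S" and m3: "3 \<le> ?m" and oc: "odd (card S)"
    and rim: "{K. maximal_clique S ?E K \<and> card K = 2} = {{vs ! i, vs ! ((i + 1) mod ?m)} | i. i < ?m}"
    using ms unfolding multisun_rim_def by auto
  have mc: "maximal_clique S ?E {vs!l, vs!(Suc l mod ?m)}" if "l < ?m" for l
  proof -
    have "{vs!l, vs!(Suc l mod ?m)} \<in> {{vs ! i, vs ! ((i + 1) mod ?m)} | i. i < ?m}" using that by auto
    then show ?thesis using rim by blast
  qed
  have ne: "vs!l \<noteq> vs!(Suc l mod ?m)" if l: "l < ?m" for l
  proof -
    have "l \<noteq> Suc l mod ?m" using l m3 unfolding suc_mod_eq[OF l] by auto
    moreover have "Suc l mod ?m < ?m" using m3 by (simp add: mod_lt3)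
    ultimately show ?thesis using dv l by (simp add: nth_eq_iff_index_eq)
  qed
  have "\<forall>l<?m. \<exists>r. r \<in> R \<and> A r (vs!l) \<and> A r (vs!(Suc l mod ?m))"
  proof (intro allI impI)
    fix l assume l: "l < ?m"
    have "?E (vs!l) (vs!(Suc l mod ?m))" using mc[OF l] ne[OF l]
      unfolding maximal_clique_def clique_def by blast
    then show "\<exists>r. r \<in> R \<and> A r (vs!l) \<and> A r (vs!(Suc l mod ?m))" unfolding GA_def by blast
  qed
  then obtain \<rho> where \<rho>: "\<forall>l<?m. \<rho> l \<in> R \<and> A (\<rho> l) (vs!l) \<and> A (\<rho> l) (vs!(Suc l mod ?m))"
    by metis
  have "cyc A (map \<rho> [0..<?m]) vs"
  proof (rule cyc_of_rows[OF dv m3], intro allI impI)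
    fix l assume l: "l < ?m"
    let ?K = "{vs!l, vs!(Suc l mod ?m)}"
    have "c \<in> ?K" if c: "c \<in> set vs" "A (\<rho> l) c" for c
    proof (rule ccontr)
      assume nc: "c \<notin> ?K"
      have "clique ?E (insert c ?K)"
        using mc[OF l] nc c \<rho> l unfolding maximal_clique_def clique_def GA_def by auto
      moreover have "c \<in> S - ?K" using c sv nc by auto
      ultimately show False using mc[OF l] unfolding maximal_clique_def by blast
    qed
    moreover have "Suc l mod ?m < ?m" using m3 by (simp add: mod_lt3)
    ultimately show "{c \<in> set vs. A (\<rho> l) c} = ?K" using \<rho> l by auto
  qed
  moreover have "set (map \<rho> [0..<?m]) \<subseteq> R" using \<rho> by auto
  moreover have "odd ?m" using oc sv dv distinct_card by metis
  moreover have "set vs \<subseteq> C" using sv assms(1) by simp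
  ultimately show ?thesis using cyc_unbalanced by blast
qed

lemma diamond_C3:
  assumes lin: "linear_matrix R C A" and nd: "\<not> diamond_free C (GA R A)"
  shows "contains_C3 R C A"
proof -
  obtain a b c d where abcd: "a \<in> C" "b \<in> C" "c \<in> C" "d \<in> C" "distinct [a, b, c, d]"
    "GA R A a b" "GA R A a c" "GA R A a d" "GA R A b c" "GA R A b d" "\<not> GA R A c d"
    using nd unfolding diamond_free_def by blast
  obtain r where r: "r \<in> R" "A r a" "A r b" using abcd(6) unfolding GA_def by blast
  show ?thesis
  proof (cases "A r c")
    case True
    have "\<not> A r d"
    proof
      assume "A r d" then have "GA R A c d" using True r abcd(5) unfolding GA_def by auto
      then show False using abcd(11) by simp
    qed
    then show ?thesis using tri_C3[OF lin abcd(1,2,4) _ _ _ r] abcd by auto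
  next
    case False
    then show ?thesis using tri_C3[OF lin abcd(1,2,3) _ _ _ r] abcd by auto
  qed
qed

lemma dir1:
  assumes lin: "linear_matrix R C A" and bal: "balanced R C A"
  shows "\<not> contains_C3 R C A \<and> diamond_free C (GA R A) \<and> \<not> has_odd_hole C (GA R A) \<and>
         \<not> (\<exists>S\<subseteq>C. HOH_free_multisun S (GA R A))"
  using bal C3_unbalanced diamond_C3[OF lin] hole_unbalanced multisun_unbalanced
  unfolding HOH_free_multisun_def by metis

definition reg2 :: "'r set \<Rightarrow> 'c set \<Rightarrow> ('r \<Rightarrow> 'c \<Rightarrow> bool) \<Rightarrow> bool" where
  "reg2 R' C' A \<longleftrightarrow> finite R' \<and> finite C' \<and> (\<forall>r\<in>R'. card {c\<in>C'. A r c} = 2) \<and>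
     (\<forall>c\<in>C'. card {r\<in>R'. A r c} = 2)"

definition closed_walk where
  "closed_walk A R' C' rs cs \<longleftrightarrow> length rs = length cs \<and> 2 \<le> length cs \<and> distinct rs \<and>
     distinct cs \<and> set rs \<subseteq> R' \<and> set cs \<subseteq> C' \<and>
     (\<forall>i<length cs. A (rs!i) (cs!i) \<and> A (rs!i) (cs!(Suc i mod length cs)))"

definition open_path where
  "open_path A R' C' rs cs \<longleftrightarrow> length cs = Suc (length rs) \<and> distinct rs \<and>
     distinct cs \<and> set rs \<subseteq> R' \<and> set cs \<subseteq> C' \<and>
     (\<forall>i<length rs. A (rs!i) (cs!i) \<and> A (rs!i) (cs!(Suc i)))"

lemma mod_lt2: "(2::nat) \<le> n \<Longrightarrow> x mod n < n"
proof -
  assume "2 \<le> n" then have "0 < n" by linarith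
  then show ?thesis by simp
qed

lemma card2_three: "card S = 2 \<Longrightarrow> a \<in> S \<Longrightarrow> b \<in> S \<Longrightarrow> c \<in> S \<Longrightarrow> a \<noteq> b \<Longrightarrow> a \<noteq> c \<Longrightarrow> b \<noteq> c \<Longrightarrow> False"
proof -
  assume "card S = 2" "a \<in> S" "b \<in> S" "c \<in> S" "a \<noteq> b" "a \<noteq> c" "b \<noteq> c"
  then obtain x y where "S = {x, y}" by (meson card_2_iff)
  then show False using \<open>a \<in> S\<close> \<open>b \<in> S\<close> \<open>c \<in> S\<close> \<open>a \<noteq> b\<close> \<open>a \<noteq> c\<close> \<open>b \<noteq> c\<close> by blast
qed

lemma card2_eq: "card S = 2 \<Longrightarrow> a \<in> S \<Longrightarrow> b \<in> S \<Longrightarrow> a \<noteq> b \<Longrightarrow> S = {a, b}"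
proof -
  assume "card S = 2" "a \<in> S" "b \<in> S" "a \<noteq> b"
  then obtain x y where "S = {x, y}" by (meson card_2_iff)
  then show ?thesis using \<open>a \<in> S\<close> \<open>b \<in> S\<close> \<open>a \<noteq> b\<close> by blast
qed

lemma card2_other: "card S = 2 \<Longrightarrow> a \<in> S \<Longrightarrow> \<exists>b\<in>S. b \<noteq> a"
proof -
  assume "card S = 2" "a \<in> S"
  then obtain x y where "S = {x, y}" "x \<noteq> y" by (meson card_2_iff)
  then show ?thesis using \<open>a \<in> S\<close> by auto
qed

lemma path_close:
  assumes reg: "reg2 R' C' A"
  shows "open_path A R' C' rs cs \<Longrightarrow> \<exists>rs' cs'. closed_walk A R' C' rs' cs'"
proof (induction "card C' - length cs" arbitrary: rs cs rule: less_induct)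
  case less
  have fin: "finite R'" "finite C'" and rr: "\<forall>r\<in>R'. card {c\<in>C'. A r c} = 2"
    and cc: "\<forall>c\<in>C'. card {r\<in>R'. A r c} = 2" using reg unfolding reg2_def by auto
  let ?m = "length rs"
  have p: "length cs = Suc ?m" "distinct rs" "distinct cs" "set rs \<subseteq> R'" "set cs \<subseteq> C'"
    "\<And>i. i < ?m \<Longrightarrow> A (rs!i) (cs!i) \<and> A (rs!i) (cs!(Suc i))"
    using less.prems unfolding open_path_def by auto
  define cm where "cm = cs!?m"
  have "cs!?m \<in> set cs" using p(1) by simp
  then have cmC: "cm \<in> C'" using p(5) unfolding cm_def by blast
  obtain r' where r': "r' \<in> R'" "A r' cm" "?m = 0 \<or> r' \<noteq> rs!(?m - 1)"
  proof -
    have c2: "card {r\<in>R'. A r cm} = 2" using cc cmC by blast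
    then obtain x y where xy: "{r\<in>R'. A r cm} = {x, y}" "x \<noteq> y" by (auto simp: card_2_iff)
    show ?thesis
    proof (cases "?m > 0 \<and> x = rs!(?m - 1)")
      case True then show ?thesis using that[of y] xy by blast
    next
      case False then show ?thesis using that[of x] xy by blast
    qed
  qed
  have r'ns: "r' \<notin> set rs"
  proof
    assume "r' \<in> set rs"
    then obtain i where i: "i < ?m" "r' = rs!i" by (metis in_set_conv_nth)
    have "Suc i \<noteq> ?m"
    proof
      assume "Suc i = ?m"
      then have "i = ?m - 1" by simp
      then show False using r'(3) i by auto
    qed
    then have si: "Suc i < ?m" using i by simp
    have "card {c\<in>C'. A r' c} = 2" using rr r'(1) by blast
    moreover have "cs!i \<in> set cs" "cs!(Suc i) \<in> set cs" using p(1) i si by simp_all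
    then have "cs!i \<in> {c\<in>C'. A r' c}" "cs!(Suc i) \<in> {c\<in>C'. A r' c}" "cm \<in> {c\<in>C'. A r' c}"
      using p(6)[OF i(1)] i(2) p(5) cmC r'(2) by blast+
    moreover have "cs!i \<noteq> cs!(Suc i)" "cs!i \<noteq> cm" "cs!(Suc i) \<noteq> cm"
      using p(1,3) i si unfolding cm_def by (auto simp: nth_eq_iff_index_eq)
    ultimately show False by (rule card2_three)
  qed
  obtain c' where c': "c' \<in> C'" "A r' c'" "c' \<noteq> cm"
  proof -
    have "card {c\<in>C'. A r' c} = 2" using rr r'(1) by blast
    then obtain b where "b \<in> {c\<in>C'. A r' c}" "b \<noteq> cm" using card2_other[of _ cm] cmC r'(2) by blast
    then show ?thesis using that by blast
  qed
  show ?case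
  proof (cases "c' \<in> set cs")
    case False
    let ?rs = "rs @ [r']" and ?cs = "cs @ [c']"
    have np: "open_path A R' C' ?rs ?cs" unfolding open_path_def
    proof (intro conjI)
      show "length ?cs = Suc (length ?rs)" using p(1) by simp
      show "distinct ?rs" using p(2) r'ns by simp
      show "distinct ?cs" using p(3) False by simp
      show "set ?rs \<subseteq> R'" using p(4) r'(1) by simp
      show "set ?cs \<subseteq> C'" using p(5) c'(1) by simp
    next
      show "\<forall>i<length ?rs. A (?rs!i) (?cs!i) \<and> A (?rs!i) (?cs!(Suc i))"
      proof (intro allI impI)
      fix i assume i: "i < length ?rs"
      show "A (?rs!i) (?cs!i) \<and> A (?rs!i) (?cs!(Suc i))"
      proof (cases "i < ?m")
        case True
        then show ?thesis using p(6)[OF True] p(1) by (simp add: nth_append)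
      next
        case False
        then have "i = ?m" using i by simp
        then show ?thesis using r'(2) c'(2) p(1) unfolding cm_def by (simp add: nth_append)
      qed
      qed
    qed
    have "card (set ?cs) \<le> card C'" using p(5) c'(1) fin(2) by (intro card_mono) auto
    moreover have "card (set ?cs) = length cs + 1" using p(3) False by (simp add: distinct_card)
    ultimately have "card C' - length ?cs < card C' - length cs" by simp
    then show ?thesis using less.hyps[OF _ np] by simp
  next
    case True
    then obtain j where j: "j < length cs" "c' = cs!j" by (metis in_set_conv_nth)
    have jm: "j \<noteq> ?m" using j c'(3) unfolding cm_def by auto
    have j0: "j = 0"
    proof (rule ccontr)
      assume "j \<noteq> 0"
      then have j1: "j - 1 < ?m" "j < ?m" "Suc (j - 1) = j" using j jm p(1) by auto
      have "card {r\<in>R'. A r c'} = 2" using cc c'(1) by blast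
      moreover have "rs!(j-1) \<in> {r\<in>R'. A r c'}"
      proof -
        have "A (rs!(j-1)) c'" using p(6)[OF j1(1)] j1(3) j(2) by simp
        moreover have "rs!(j-1) \<in> R'" using p(4) j1(1) nth_mem by blast
        ultimately show ?thesis by simp
      qed
      moreover have "rs!j \<in> {r\<in>R'. A r c'}"
      proof -
        have "A (rs!j) c'" using p(6)[OF j1(2)] j(2) by simp
        moreover have "rs!j \<in> R'" using p(4) j1(2) nth_mem by blast
        ultimately show ?thesis by simp
      qed
      moreover have "r' \<in> {r\<in>R'. A r c'}" using r' c' by blast
      moreover have "rs!(j-1) \<noteq> rs!j" using p(2) j1 by (simp add: nth_eq_iff_index_eq)
      moreover have "rs!(j-1) \<noteq> r'" "rs!j \<noteq> r'" using r'ns j1 by auto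
      ultimately show False by (rule card2_three)
    qed
    have m1: "?m \<ge> 1"
    proof (rule ccontr)
      assume "\<not> ?m \<ge> 1" then have "?m = 0" by linarith
      then show False using j0 j c'(3) unfolding cm_def by simp
    qed
    have "closed_walk A R' C' (rs @ [r']) cs" unfolding closed_walk_def
    proof (intro conjI)
      show "length (rs @ [r']) = length cs" using p(1) by simp
      show "2 \<le> length cs" using p(1) m1 by simp
      show "distinct (rs @ [r'])" using p(2) r'ns by simp
      show "distinct cs" "set cs \<subseteq> C'" using p by auto
      show "set (rs @ [r']) \<subseteq> R'" using p(4) r'(1) by simp
    next
      show "\<forall>i<length cs. A ((rs @ [r'])!i) (cs!i) \<and> A ((rs @ [r'])!i) (cs!(Suc i mod length cs))"
      proof (intro allI impI)
      fix i assume i: "i < length cs"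
      show "A ((rs @ [r'])!i) (cs!i) \<and> A ((rs @ [r'])!i) (cs!(Suc i mod length cs))"
      proof (cases "i < ?m")
        case True
        then have "Suc i mod length cs = Suc i" using p(1) by simp
        then show ?thesis using p(6)[OF True] True by (simp add: nth_append)
      next
        case False
        then have "i = ?m" using i p(1) by simp
        then show ?thesis using r'(2) c'(2) p(1) j j0 unfolding cm_def by (simp add: nth_append)
      qed
      qed
    qed
    then show ?thesis by blast
  qed
qed

lemma walk_rows:
  assumes reg: "reg2 R' C' A" and w: "closed_walk A R' C' rs cs" and i: "i < length cs"
  shows "{c\<in>C'. A (rs!i) c} = {cs!i, cs!(Suc i mod length cs)}"
proof -
  let ?n = "length cs"
  have w': "length rs = ?n" "2 \<le> ?n" "distinct rs" "distinct cs" "set rs \<subseteq> R'" "set cs \<subseteq> C'"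
    "A (rs!i) (cs!i)" "A (rs!i) (cs!(Suc i mod ?n))" using w i unfolding closed_walk_def by auto
  have si: "Suc i mod ?n < ?n" using w'(2) by (simp add: mod_lt2)
  have "i \<noteq> Suc i mod ?n" using i w'(2) unfolding suc_mod_eq[OF i] by auto
  then have ne: "cs!i \<noteq> cs!(Suc i mod ?n)" using w'(4) i si by (simp add: nth_eq_iff_index_eq)
  have "card {c\<in>C'. A (rs!i) c} = 2" using reg w'(1,5) i unfolding reg2_def by (metis nth_mem subsetD)
  moreover have "cs!i \<in> {c\<in>C'. A (rs!i) c}" "cs!(Suc i mod ?n) \<in> {c\<in>C'. A (rs!i) c}"
    using w'(6,7,8) i si by (auto dest: nth_mem)
  ultimately show ?thesis using card2_eq ne by metis
qed

lemma walk_cols: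
  assumes reg: "reg2 R' C' A" and w: "closed_walk A R' C' rs cs" and j: "j < length cs"
  shows "{r\<in>R'. A r (cs!j)} = {rs!j, rs!((j + length cs - 1) mod length cs)}"
proof -
  let ?n = "length cs"
  let ?p = "(j + ?n - 1) mod ?n"
  have w': "length rs = ?n" "2 \<le> ?n" "distinct rs" "distinct cs" "set rs \<subseteq> R'" "set cs \<subseteq> C'"
    "\<forall>i<?n. A (rs!i) (cs!i) \<and> A (rs!i) (cs!(Suc i mod ?n))" using w unfolding closed_walk_def by auto
  have pl: "?p < ?n" using w'(2) by (simp add: mod_lt2)
  have sp: "Suc ?p mod ?n = j" using j w'(2) unfolding pred_mod_eq[OF j]
    by (cases "j = 0") (auto simp: mod_less)
  have ne: "j \<noteq> ?p" using j w'(2) unfolding pred_mod_eq[OF j] by auto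
  then have ne': "rs!j \<noteq> rs!?p" using w'(1,3) j pl by (simp add: nth_eq_iff_index_eq)
  have "card {r\<in>R'. A r (cs!j)} = 2" using reg w'(6) j unfolding reg2_def by (metis nth_mem subsetD)
  moreover have "rs!j \<in> {r\<in>R'. A r (cs!j)}" using w'(1,5,7) j by (auto dest: nth_mem)
  moreover have "rs!?p \<in> {r\<in>R'. A r (cs!j)}" using w'(1,5) w'(7)[rule_format, OF pl] pl sp
    by (auto dest: nth_mem)
  ultimately show ?thesis using card2_eq ne' by metis
qed

lemma reg2_odd_cyc:
  shows "reg2 R' C' A \<Longrightarrow> card R' = card C' \<Longrightarrow> odd (card C') \<Longrightarrow>
    \<exists>rs cs. cyc A rs cs \<and> odd (length cs) \<and> set rs \<subseteq> R' \<and> set cs \<subseteq> C'"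
proof (induction "card C'" arbitrary: R' C' rule: less_induct)
  case less
  have fin: "finite R'" "finite C'" using less.prems unfolding reg2_def by auto
  have "C' \<noteq> {}" using less.prems(3) by auto
  then obtain c0 where c0: "c0 \<in> C'" by blast
  have "open_path A R' C' [] [c0]" unfolding open_path_def using c0 by simp
  then obtain rs cs where w: "closed_walk A R' C' rs cs" using path_close[OF less.prems(1)] by blast
  let ?n = "length cs"
  have w': "length rs = ?n" "2 \<le> ?n" "distinct rs" "distinct cs" "set rs \<subseteq> R'" "set cs \<subseteq> C'"
    using w unfolding closed_walk_def by auto
  show ?case
  proof (cases "odd ?n")
    case True
    have "cyc A rs cs" unfolding cyc_def
    proof (intro conjI allI impI)
      show "length rs = ?n" "distinct rs" "distinct cs" by (fact w')+
      show "3 \<le> ?n" using w'(2) True by presburger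
    next
      fix i assume i: "i < ?n"
      have si: "Suc i mod ?n < ?n" using w'(2) by (simp add: mod_lt2)
      have "{c \<in> set cs. A (rs!i) c} = set cs \<inter> {c\<in>C'. A (rs!i) c}" using w'(6) by auto
      also have "\<dots> = {cs!i, cs!(Suc i mod ?n)}" unfolding walk_rows[OF less.prems(1) w i]
        using i si by auto
      finally show "{c \<in> set cs. A (rs!i) c} = {cs!i, cs!(Suc i mod ?n)}" .
    qed
    then show ?thesis using True w' by blast
  next
    case False
    let ?R = "R' - set rs" and ?C = "C' - set cs"
    have rowsame: "{c\<in>?C. A r c} = {c\<in>C'. A r c}" if r: "r \<in> ?R" for r
    proof -
      have "c \<notin> set cs" if "c \<in> C'" "A r c" for c
      proof
        assume "c \<in> set cs"
        then obtain j where j: "j < ?n" "c = cs!j" by (metis in_set_conv_nth)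
        have "r \<in> {rs!j, rs!((j + ?n - 1) mod ?n)}"
          using walk_cols[OF less.prems(1) w j(1)] r that j by auto
        moreover have "(j + ?n - 1) mod ?n < length rs" using w' by (simp add: mod_lt2)
        ultimately show False using r j w'(1) by (auto dest: nth_mem)
      qed
      then show ?thesis by auto
    qed
    have colsame: "{r\<in>?R. A r c} = {r\<in>R'. A r c}" if c: "c \<in> ?C" for c
    proof -
      have "r \<notin> set rs" if "r \<in> R'" "A r c" for r
      proof
        assume "r \<in> set rs"
        then obtain i where i: "i < ?n" "r = rs!i" using w'(1) by (metis in_set_conv_nth)
        have "c \<in> {cs!i, cs!(Suc i mod ?n)}"
          using walk_rows[OF less.prems(1) w i(1)] c that i by auto
        moreover have "Suc i mod ?n < ?n" using w' by (simp add: mod_lt2)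
        ultimately show False using c i by (auto dest: nth_mem)
      qed
      then show ?thesis by auto
    qed
    have reg': "reg2 ?R ?C A" unfolding reg2_def
    proof (intro conjI ballI)
      show "finite ?R" "finite ?C" using fin by auto
    next
      fix r assume r: "r \<in> ?R"
      have "card {c\<in>C'. A r c} = 2" using less.prems(1) r unfolding reg2_def by blast
      then show "card {c\<in>?C. A r c} = 2" using rowsame[OF r] by simp
    next
      fix c assume c: "c \<in> ?C"
      have "card {r\<in>R'. A r c} = 2" using less.prems(1) c unfolding reg2_def by blast
      then show "card {r\<in>?R. A r c} = 2" using colsame[OF c] by simp
    qed
    have cC: "card ?C = card C' - ?n" using w'(4,6) fin by (simp add: card_Diff_subset distinct_card)
    have cR: "card ?R = card R' - ?n" using w'(1,3,5) fin by (simp add: card_Diff_subset distinct_card)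
    have le: "?n \<le> card C'" using w'(4,6) fin(2) by (metis card_mono distinct_card)
    have "card ?C < card C'" using cC le w'(2) by simp
    moreover have "card ?R = card ?C" using cC cR less.prems(2) by simp
    moreover have "odd (card ?C)" using cC le False less.prems(3) by auto
    ultimately have "\<exists>rs cs. cyc A rs cs \<and> odd (length cs) \<and> set rs \<subseteq> ?R \<and> set cs \<subseteq> ?C"
      using less.hyps[OF _ reg'] by simp
    then show ?thesis by blast
  qed
qed

lemma unbalanced_cyc:
  assumes "finite R" "finite C" "\<not> balanced R C A"
  shows "\<exists>rs cs. cyc A rs cs \<and> odd (length cs) \<and> set rs \<subseteq> R \<and> set cs \<subseteq> C"
proof -
  have ex: "\<exists>R' C'. R' \<subseteq> R \<and> C' \<subseteq> C \<and> card R' = card C' \<and> odd (card R') \<and>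
    (\<forall>r\<in>R'. card {c\<in>C'. A r c} = 2) \<and> (\<forall>c\<in>C'. card {r\<in>R'. A r c} = 2)"
    using assms(3) unfolding balanced_def by (rule notnotD)
  then obtain R' where "\<exists>C'. R' \<subseteq> R \<and> C' \<subseteq> C \<and> card R' = card C' \<and> odd (card R') \<and>
    (\<forall>r\<in>R'. card {c\<in>C'. A r c} = 2) \<and> (\<forall>c\<in>C'. card {r\<in>R'. A r c} = 2)" ..
  then obtain C' where rc0: "R' \<subseteq> R \<and> C' \<subseteq> C \<and> card R' = card C' \<and> odd (card R') \<and>
    (\<forall>r\<in>R'. card {c\<in>C'. A r c} = 2) \<and> (\<forall>c\<in>C'. card {r\<in>R'. A r c} = 2)" ..
  note rc = conjunct1[OF rc0] conjunct1[OF conjunct2[OF rc0]]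
    conjunct1[OF conjunct2[OF conjunct2[OF rc0]]]
    conjunct1[OF conjunct2[OF conjunct2[OF conjunct2[OF rc0]]]]
    conjunct1[OF conjunct2[OF conjunct2[OF conjunct2[OF conjunct2[OF rc0]]]]]
    conjunct2[OF conjunct2[OF conjunct2[OF conjunct2[OF conjunct2[OF rc0]]]]]
  have "finite R'" using rc(1) assms(1) by (rule finite_subset)
  moreover have "finite C'" using rc(2) assms(2) by (rule finite_subset)
  ultimately have "reg2 R' C' A" unfolding reg2_def using rc(5,6) by (intro conjI)
  have "\<exists>rs cs. cyc A rs cs \<and> odd (length cs) \<and> set rs \<subseteq> R' \<and> set cs \<subseteq> C'"
  proof -
    have "odd (card C')" using rc(3,4) by simp
    then show ?thesis using reg2_odd_cyc[OF _ rc(3)] \<open>reg2 R' C' A\<close> by blast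
  qed
  then obtain rs cs where "cyc A rs cs \<and> odd (length cs) \<and> set rs \<subseteq> R' \<and> set cs \<subseteq> C'" by blast
  then show ?thesis using rc(1,2) by (meson order_trans)
qed

lemma cyc_rotate:
  assumes "cyc A rs cs"
  shows "cyc A (rotate n rs) (rotate n cs)"
proof -
  let ?k = "length cs"
  have c: "length rs = ?k" "3 \<le> ?k" "distinct rs" "distinct cs"
    "\<And>i. i < ?k \<Longrightarrow> {c \<in> set cs. A (rs!i) c} = {cs!i, cs!(Suc i mod ?k)}"
    using assms unfolding cyc_def by auto
  show ?thesis unfolding cyc_def
  proof (intro conjI allI impI)
    show "length (rotate n rs) = length (rotate n cs)" "3 \<le> length (rotate n cs)"
      "distinct (rotate n rs)" "distinct (rotate n cs)" using c by auto
  next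
    fix i assume i: "i < length (rotate n cs)"
    then have i': "i < ?k" by simp
    have p: "(n + i) mod ?k < ?k" using c(2) by (simp add: mod_lt3)
    have si: "Suc i mod ?k < ?k" using c(2) by (simp add: mod_lt3)
    have e1: "rotate n rs ! i = rs ! ((n + i) mod ?k)" using i' c(1) by (simp add: nth_rotate)
    have e2: "rotate n cs ! i = cs ! ((n + i) mod ?k)" using i' by (simp add: nth_rotate)
    have e3: "rotate n cs ! (Suc i mod ?k) = cs ! ((n + Suc i mod ?k) mod ?k)" using si by (simp add: nth_rotate)
    have "(n + Suc i mod ?k) mod ?k = Suc ((n + i) mod ?k) mod ?k"
      by (simp add: mod_add_right_eq mod_Suc_eq)
    then show "{c \<in> set (rotate n cs). A (rotate n rs ! i) c} =
      {rotate n cs ! i, rotate n cs ! (Suc i mod length (rotate n cs))}"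
      using c(5)[OF p] e1 e2 e3 by simp
  qed
qed

lemma nth_pair_eq:
  assumes "distinct xs" "a < length xs" "b < length xs" "c < length xs" "d < length xs"
    "{xs!a, xs!b} = {xs!c, xs!d}"
  shows "{a, b} = {c, d}"
proof -
  have ij: "inj_on ((!) xs) {..<length xs}" using assms(1) by (simp add: inj_on_nth)
  have "(!) xs ` {a, b} = (!) xs ` {c, d}" using assms(6) by simp
  moreover have "{a, b} \<subseteq> {..<length xs}" "{c, d} \<subseteq> {..<length xs}" using assms(2-5) by auto
  ultimately show ?thesis using inj_on_image_eq_iff[OF ij] by metis
qed

lemma chord_sub:
  assumes cy: "cyc A rs cs" and r: "{c \<in> set cs. A r c} = {cs!0, cs!j}"
    and j: "2 \<le> j" "j < length cs"
  shows "cyc A (take j rs @ [r]) (take (Suc j) cs)"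
proof -
  let ?k = "length cs"
  have c: "length rs = ?k" "3 \<le> ?k" "distinct rs" "distinct cs"
    "\<And>i. i < ?k \<Longrightarrow> {c \<in> set cs. A (rs!i) c} = {cs!i, cs!(Suc i mod ?k)}"
    using cy unfolding cyc_def by auto
  have rn: "r \<notin> set (take j rs)"
  proof
    assume "r \<in> set (take j rs)"
    then obtain l where l: "l < j" "r = rs!l" using c(1) j by (auto simp: in_set_conv_nth)
    have sl: "Suc l < ?k" "Suc l mod ?k = Suc l" using l j by auto
    have eq: "{cs!l, cs!(Suc l)} = {cs!0, cs!j}" using c(5)[of l] sl l r j by simp
    have "{l, Suc l} = {0, j}"
      by (rule nth_pair_eq[OF c(4)]) (use eq sl j l in auto)
    then show False using l j by (auto simp: doubleton_eq_iff)
  qed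
  let ?rs = "take j rs @ [r]" and ?cs = "take (Suc j) cs"
  have len: "length ?rs = Suc j" "length ?cs = Suc j" using c(1) j by auto
  have sub: "set ?cs \<subseteq> set cs" by (rule set_take_subset)
  have mem: "cs!t \<in> set ?cs" if "t \<le> j" for t
  proof -
    have "?cs ! t = cs ! t" using that by simp
    moreover have "t < length ?cs" using len that by simp
    ultimately show ?thesis by (metis nth_mem)
  qed
  show ?thesis unfolding cyc_def
  proof (intro conjI allI impI)
    show "length ?rs = length ?cs" "3 \<le> length ?cs" using len j by auto
    show "distinct ?rs" using rn c(3) by simp
    show "distinct ?cs" using c(4) by simp
  next
    fix i assume i: "i < length ?cs"
    show "{c \<in> set ?cs. A (?rs!i) c} = {?cs!i, ?cs!(Suc i mod length ?cs)}"
    proof (cases "i < j")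
      case True
      have sl: "Suc i < ?k" "Suc i mod ?k = Suc i" "Suc i mod length ?cs = Suc i" using True j len by auto
      have e: "?rs!i = rs!i" "?cs!i = cs!i" "?cs!(Suc i) = cs!(Suc i)" using True c(1) j
        by (auto simp: nth_append)
      have "{c \<in> set ?cs. A (rs!i) c} = set ?cs \<inter> {c \<in> set cs. A (rs!i) c}" using sub by auto
      also have "\<dots> = set ?cs \<inter> {cs!i, cs!(Suc i)}" using c(5)[of i] sl True j by simp
      also have "\<dots> = {cs!i, cs!(Suc i)}" using mem[of i] mem[of "Suc i"] True by auto
      finally show ?thesis using e sl by simp
    next
      case False
      then have ij: "i = j" using i len by simp
      have e: "?rs!i = r" "?cs!i = cs!j" "?cs!(Suc i mod length ?cs) = cs!0" using ij c(1) j len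
        by (auto simp: nth_append)
      have "{c \<in> set ?cs. A r c} = set ?cs \<inter> {c \<in> set cs. A r c}" using sub by auto
      also have "\<dots> = {cs!0, cs!j}" using r mem[of 0] mem[of j] by auto
      finally show ?thesis using e by auto
    qed
  qed
qed

lemma cyc3_C3:
  assumes "cyc A rs cs" "length cs = 3" "set rs \<subseteq> R" "set cs \<subseteq> C"
  shows "contains_C3 R C A"
proof -
  have c: "length rs = 3" "distinct rs" "distinct cs"
    "\<And>i. i < 3 \<Longrightarrow> {c \<in> set cs. A (rs!i) c} = {cs!i, cs!(Suc i mod 3)}"
    using assms unfolding cyc_def by auto
  show ?thesis unfolding contains_C3_def
  proof (intro exI conjI)
    show "inj_on ((!) rs) {0..<3}" using inj_on_nth[OF c(2), of "{0..<3}"] c(1) by simp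
    show "inj_on ((!) cs) {0..<3}" using inj_on_nth[OF c(3), of "{0..<3}"] assms(2) by simp
    show "(!) rs ` {0..<3} \<subseteq> R" using assms(3) c(1) by (auto dest: nth_mem)
    show "(!) cs ` {0..<3} \<subseteq> C" using assms(4,2) by (auto dest: nth_mem)
    show "\<forall>i<3. \<forall>j<3. A (rs!i) (cs!j) = C3 i j"
    proof (intro allI impI)
      fix i j :: nat assume ij: "i < 3" "j < 3"
      have "A (rs!i) (cs!j) \<longleftrightarrow> cs!j \<in> {c \<in> set cs. A (rs!i) c}" using ij assms(2) by simp
      also have "\<dots> \<longleftrightarrow> cs!j \<in> {cs!i, cs!(Suc i mod 3)}" using c(4)[OF ij(1)] by simp
      also have "\<dots> \<longleftrightarrow> j = i \<or> j = Suc i mod 3"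
        using c(3) ij assms(2) by (auto simp: nth_eq_iff_index_eq)
      also have "\<dots> \<longleftrightarrow> C3 i j" unfolding C3_def by simp
      finally show "A (rs!i) (cs!j) = C3 i j" .
    qed
  qed
qed

lemma row_clique:
  assumes lin: "linear_matrix R C A" and nc: "\<not> contains_C3 R C A"
    and C: "a \<in> C" "b \<in> C" "x \<in> C" and d: "a \<noteq> b" "a \<noteq> x" "b \<noteq> x"
    and r: "r \<in> R" "A r a" "A r b" and ax: "GA R A a x" and bx: "GA R A b x"
  shows "A r x"
  using tri_C3[OF lin C d r _ ax bx] nc by blast

lemma clique_row:
  assumes lin: "linear_matrix R C A" and nc: "\<not> contains_C3 R C A"
    and K: "K \<subseteq> C" "clique (GA R A) K" "a \<in> K" "b \<in> K" "a \<noteq> b"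
  shows "\<exists>r\<in>R. \<forall>x\<in>K. A r x"
proof -
  have "GA R A a b" using K unfolding clique_def by blast
  then obtain r where r: "r \<in> R" "A r a" "A r b" unfolding GA_def by blast
  have "A r x" if x: "x \<in> K" for x
  proof (cases "x = a \<or> x = b")
    case True then show ?thesis using r by blast
  next
    case False
    have "GA R A a x" "GA R A b x" using K x False unfolding clique_def by auto
    then show ?thesis using row_clique[OF lin nc _ _ _ K(5) _ _ r] K x False by auto
  qed
  then show ?thesis using r(1) by blast
qed

lemma suc_mod_inj_aux:
  fixes t t' m st st' :: nat
  assumes "(Suc t < m \<and> st = Suc t) \<or> (Suc t = m \<and> st = 0)"
    "(Suc t' < m \<and> st' = Suc t') \<or> (Suc t' = m \<and> st' = 0)" "st = st'"
  shows "t = t'"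
  using assms by presburger

lemma suc_mod_inj: "t < m \<Longrightarrow> t' < m \<Longrightarrow> Suc t mod m = Suc t' mod m \<Longrightarrow> t = t'"
proof -
  assume a: "t < m" "t' < m" "Suc t mod m = Suc t' mod m"
  show "t = t'" by (rule suc_mod_inj_aux[OF suc_mod_cases[OF a(1)] suc_mod_cases[OF a(2)] a(3)])
qed

lemma hole_three_nbrs:
  assumes ic: "induced_cycle E hs" and a: "a < length hs"
    and t: "t1 < length hs" "t2 < length hs" "t3 < length hs" "t1 \<noteq> t2" "t1 \<noteq> t3" "t2 \<noteq> t3"
    and e: "E (hs!a) (hs!t1)" "E (hs!a) (hs!t2)" "E (hs!a) (hs!t3)"
  shows False
proof -
  have "t1 = Suc a mod length hs \<or> a = Suc t1 mod length hs"
       "t2 = Suc a mod length hs \<or> a = Suc t2 mod length hs"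
       "t3 = Suc a mod length hs \<or> a = Suc t3 mod length hs"
    using induced_cycle_adj[OF ic a] t e by auto
  note h = this
  let ?m = "length hs"
  show False
  proof (cases "t1 = Suc a mod ?m")
    case True
    then have "a = Suc t2 mod ?m" "a = Suc t3 mod ?m" using h t by auto
    then have "t2 = t3" using suc_mod_inj[OF t(2,3)] by simp
    then show False using t by simp
  next
    case False
    then have a1: "a = Suc t1 mod ?m" using h by auto
    show False
    proof (cases "t2 = Suc a mod ?m")
      case True
      then have "a = Suc t3 mod ?m" using h t by auto
      then have "t1 = t3" using suc_mod_inj[OF t(1,3)] a1 by simp
      then show False using t by simp
    next
      case False
      then have "a = Suc t2 mod ?m" using h by auto
      then have "t1 = t2" using suc_mod_inj[OF t(1,2)] a1 by simp
      then show False using t by simp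
    qed
  qed
qed

locale mc =
  fixes R :: "'r set" and C :: "'c set" and A :: "'r \<Rightarrow> 'c \<Rightarrow> bool"
    and rs :: "'r list" and cs :: "'c list"
  assumes finR: "finite R" and finC: "finite C" and lin: "linear_matrix R C A"
    and nc: "\<not> contains_C3 R C A" and cy: "cyc A rs cs" and od: "odd (length cs)"
    and sR: "set rs \<subseteq> R" and sC: "set cs \<subseteq> C"
    and mn: "\<And>rs' cs'. cyc A rs' cs' \<Longrightarrow> odd (length cs') \<Longrightarrow> set rs' \<subseteq> R \<Longrightarrow> set cs' \<subseteq> C
               \<Longrightarrow> length cs \<le> length cs'"
begin

lemma basic: "length rs = length cs" "3 \<le> length cs" "distinct rs" "distinct cs"
  using cy unfolding cyc_def by auto

lemma rowset: "i < length cs \<Longrightarrow> {c \<in> set cs. A (rs!i) c} = {cs!i, cs!(Suc i mod length cs)}"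
  using cy unfolding cyc_def by auto

lemma sucl: "Suc i mod length cs < length cs"
  using basic(2) by (simp add: mod_lt3)

lemma rim_ne: "i < length cs \<Longrightarrow> cs!i \<noteq> cs!(Suc i mod length cs)"
proof -
  assume i: "i < length cs"
  have "i \<noteq> Suc i mod length cs" using i basic(2) unfolding suc_mod_eq[OF i] by auto
  then show ?thesis using basic(4) i sucl by (simp add: nth_eq_iff_index_eq)
qed

lemma rim_row: "i < length cs \<Longrightarrow> rs!i \<in> R \<and> A (rs!i) (cs!i) \<and> A (rs!i) (cs!(Suc i mod length cs))"
proof -
  assume i: "i < length cs"
  have "rs!i \<in> R" using sR basic(1) i by (metis nth_mem subsetD)
  moreover have "cs!i \<in> {c \<in> set cs. A (rs!i) c}" "cs!(Suc i mod length cs) \<in> {c \<in> set cs. A (rs!i) c}"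
    unfolding rowset[OF i] by auto
  ultimately show ?thesis by simp
qed

lemma rim_adj: "i < length cs \<Longrightarrow> GA R A (cs!i) (cs!(Suc i mod length cs))"
  using rim_row rim_ne unfolding GA_def by blast

lemma k5: "5 \<le> length cs"
proof -
  have "length cs \<noteq> 3" using cyc3_C3[OF cy _ sR sC] nc by blast
  then show ?thesis using basic(2) od by presburger
qed

lemma rowV_clique: "r \<in> R \<Longrightarrow> clique (GA R A) {c \<in> set cs. A r c}"
  unfolding clique_def GA_def by blast

lemma GA_sym: "GA R A x y \<Longrightarrow> GA R A y x"
  unfolding GA_def by blast

lemma clique2: "GA R A x y \<Longrightarrow> clique (GA R A) {x, y}"
  unfolding clique_def using GA_sym by blast

lemma mc_row:
  assumes K: "maximal_clique (set cs) (GA R A) K"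
  shows "\<exists>r\<in>R. K = {c \<in> set cs. A r c} \<and> (\<exists>a b. a \<in> K \<and> b \<in> K \<and> a \<noteq> b)"
proof -
  have KV: "K \<subseteq> set cs" and Kc: "clique (GA R A) K"
    and Km: "\<forall>v\<in>set cs - K. \<not> clique (GA R A) (insert v K)"
    using K unfolding maximal_clique_def by auto
  have "K \<noteq> {}"
  proof
    assume K0: "K = {}"
    have "cs!0 \<in> set cs" using basic(2) by (intro nth_mem) linarith
    then have "\<not> clique (GA R A) (insert (cs!0) K)" using Km K0 by blast
    then show False using K0 unfolding clique_def by simp
  qed
  then obtain a where a: "a \<in> K" by blast
  have "\<exists>b\<in>K. b \<noteq> a"
  proof (rule ccontr)
    assume "\<not> (\<exists>b\<in>K. b \<noteq> a)"
    then have Ka: "K = {a}" using a by blast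
    have "a \<in> set cs" using KV a by blast
    then obtain i where i: "i < length cs" "a = cs!i" by (metis in_set_conv_nth)
    let ?b = "cs!(Suc i mod length cs)"
    have "?b \<in> set cs" using sucl by (rule nth_mem)
    moreover have "?b \<noteq> a" using rim_ne[OF i(1)] i(2) by simp
    ultimately have bK: "?b \<in> set cs - K" using Ka by simp
    have "clique (GA R A) {?b, a}" using clique2[OF GA_sym[OF rim_adj[OF i(1)]]] i(2) by simp
    then have "clique (GA R A) (insert ?b K)" using Ka by simp
    then show False using Km bK by blast
  qed
  then obtain b where b: "b \<in> K" "b \<noteq> a" by blast
  have KC: "K \<subseteq> C" using KV sC by (rule order_trans)
  obtain r where r: "r \<in> R" "\<forall>x\<in>K. A r x"
    using clique_row[OF lin nc KC Kc a b(1) b(2)[symmetric]] by blast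
  have "K = {c \<in> set cs. A r c}"
  proof
    show "K \<subseteq> {c \<in> set cs. A r c}" using r KV by auto
    show "{c \<in> set cs. A r c} \<subseteq> K"
    proof
      fix c assume c: "c \<in> {c \<in> set cs. A r c}"
      show "c \<in> K"
      proof (rule ccontr)
        assume cK: "c \<notin> K"
        have "clique (GA R A) (insert c K)"
          unfolding clique_def GA_def using c r(1) r(2) by blast
        moreover have "c \<in> set cs - K" using c cK by blast
        ultimately show False using Km by blast
      qed
    qed
  qed
  then show ?thesis using r a b by blast
qed

lemma K_eq_row:
  assumes K: "maximal_clique (set cs) (GA R A) K" and xy: "x \<in> K" "y \<in> K" "x \<noteq> y"
    and r: "r \<in> R" "A r x" "A r y"
  shows "K = {c \<in> set cs. A r c}"
proof -
  obtain r' where r': "r' \<in> R" "K = {c \<in> set cs. A r' c}" using mc_row[OF K] by blast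
  have "x \<in> C" "y \<in> C" using r' xy sC by auto
  moreover have "A r' x" "A r' y" using r' xy by auto
  ultimately have "r' = r" using lin_uniq[OF lin r'(1) r(1) _ _ xy(3)] r by blast
  then show ?thesis using r' by simp
qed

lemma consec_iff: "consecutive cs u v \<longleftrightarrow> (\<exists>i<length cs. {u, v} = {cs!i, cs!(Suc i mod length cs)})"
  unfolding consecutive_def by simp

lemma insc_nc:
  assumes K: "maximal_clique (set cs) (GA R A) K" "card K \<noteq> 2" and uv: "u \<in> K" "v \<in> K" "u \<noteq> v"
  shows "\<not> consecutive cs u v"
proof
  assume "consecutive cs u v"
  then obtain i where i: "i < length cs" "{u, v} = {cs!i, cs!(Suc i mod length cs)}"
    unfolding consec_iff by blast
  have "K = {c \<in> set cs. A (rs!i) c}"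
  proof (rule K_eq_row[OF K(1) uv])
    show "rs!i \<in> R" using rim_row[OF i(1)] by simp
    show "A (rs!i) u" "A (rs!i) v" using rim_row[OF i(1)] i(2) by (auto simp: doubleton_eq_iff)
  qed
  then have "K = {cs!i, cs!(Suc i mod length cs)}" using rowset[OF i(1)] by simp
  then show False using K(2) rim_ne[OF i(1)] by simp
qed

lemma rim_max:
  assumes i: "i < length cs"
  shows "maximal_clique (set cs) (GA R A) {cs!i, cs!(Suc i mod length cs)}"
  unfolding maximal_clique_def
proof (intro conjI ballI)
  let ?a = "cs!i" and ?b = "cs!(Suc i mod length cs)"
  show "{?a, ?b} \<subseteq> set cs" using i sucl by auto
  show "clique (GA R A) {?a, ?b}" using rim_adj[OF i] unfolding clique_def GA_def by auto
  fix v assume v: "v \<in> set cs - {?a, ?b}"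
  show "\<not> clique (GA R A) (insert v {?a, ?b})"
  proof
    assume "clique (GA R A) (insert v {?a, ?b})"
    then have "GA R A ?a v" "GA R A ?b v" using v unfolding clique_def by auto
    moreover have "?a \<in> C" "?b \<in> C" "v \<in> C" using i sucl v sC by auto
    ultimately have "A (rs!i) v" using row_clique[OF lin nc, of ?a ?b v "rs!i"] rim_row[OF i] rim_ne[OF i] v
      by auto
    then have "v \<in> {c \<in> set cs. A (rs!i) c}" using v by simp
    then show False using rowset[OF i] v by simp
  qed
qed

end

context mc
begin

lemma chord_contra:
  assumes r: "r \<in> R" "{c \<in> set cs. A r c} = {u, v}" and uv: "u \<noteq> v" "\<not> consecutive cs u v"
  shows False
proof -
  let ?k = "length cs"
  have k3: "3 \<le> ?k" using basic(2) .
  have uV: "u \<in> set cs" and vV: "v \<in> set cs" using r(2) by blast+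
  obtain a where a: "a < ?k" "u = cs!a" using uV by (metis in_set_conv_nth)
  obtain b where b: "b < ?k" "v = cs!b" using vV by (metis in_set_conv_nth)
  define j where "j = (b + ?k - a) mod ?k"
  have jk: "j < ?k" unfolding j_def using k3 by (simp add: mod_lt3)
  have bj: "(a + j) mod ?k = b"
  proof -
    have "(a + j) mod ?k = (a + (b + ?k - a)) mod ?k" unfolding j_def by (simp add: mod_add_right_eq)
    also have "a + (b + ?k - a) = b + ?k" using a(1) by simp
    finally show ?thesis using b(1) by simp
  qed
  define rcs where "rcs = rotate a cs"
  define rrs where "rrs = rotate a rs"
  have cyr: "cyc A rrs rcs" unfolding rcs_def rrs_def by (rule cyc_rotate[OF cy])
  have lr: "length rcs = ?k" "set rcs = set cs" "set rrs = set rs" unfolding rcs_def rrs_def by auto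
  have kp: "0 < ?k" using k3 by linarith
  have r0: "rcs!0 = u" unfolding rcs_def using a kp by (simp add: nth_rotate)
  have rj: "rcs!j = v" unfolding rcs_def using jk bj b by (simp add: nth_rotate)
  have j0: "j \<noteq> 0"
  proof
    assume "j = 0"
    then have "b = a" using bj a(1) by simp
    then show False using a b uv(1) by simp
  qed
  have j1: "j \<noteq> 1"
  proof
    assume "j = 1"
    then have "b = Suc a mod ?k" using bj by simp
    then have "consecutive cs u v" unfolding consec_iff using a b by blast
    then show False using uv(2) by simp
  qed
  have jk1: "j \<noteq> ?k - 1"
  proof
    assume "j = ?k - 1"
    then have "(a + ?k - 1) mod ?k = b" using bj k3 by simp
    then have "Suc b mod ?k = Suc (a + ?k - 1) mod ?k" by (metis mod_Suc_eq)
    also have "Suc (a + ?k - 1) = a + ?k" using k3 by simp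
    finally have "Suc b mod ?k = a" using a(1) by simp
    then have "{u, v} = {cs!b, cs!(Suc b mod ?k)}" using a b by auto
    then have "consecutive cs u v" unfolding consec_iff using b by blast
    then show False using uv(2) by simp
  qed
  have j2: "2 \<le> j" "j \<le> ?k - 2" using j0 j1 jk1 jk by auto
  have rr1: "{c \<in> set rcs. A r c} = {rcs!0, rcs!j}" using r(2) lr r0 rj by simp
  have sub1: "cyc A (take j rrs @ [r]) (take (Suc j) rcs)"
    by (rule chord_sub[OF cyr rr1 j2(1)]) (use jk lr in simp)
  define rc2 where "rc2 = rotate j rcs"
  define rr2 where "rr2 = rotate j rrs"
  have cy2: "cyc A rr2 rc2" unfolding rc2_def rr2_def by (rule cyc_rotate[OF cyr])
  have l2: "length rc2 = ?k" "set rc2 = set cs" "set rr2 = set rs" unfolding rc2_def rr2_def using lr by auto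
  have c20: "rc2!0 = v" unfolding rc2_def using jk lr rj kp by (simp add: nth_rotate)
  have c2k: "rc2!(?k - j) = u"
  proof -
    have "?k - j < ?k" using j2 k3 by simp
    then have "rc2!(?k - j) = rcs!((j + (?k - j)) mod ?k)" unfolding rc2_def using lr by (simp add: nth_rotate)
    also have "j + (?k - j) = ?k" using jk by simp
    finally show ?thesis using r0 by simp
  qed
  have rr2: "{c \<in> set rc2. A r c} = {rc2!0, rc2!(?k - j)}" using r(2) l2 c20 c2k by (simp add: insert_commute)
  have sub2: "cyc A (take (?k - j) rr2 @ [r]) (take (Suc (?k - j)) rc2)"
    by (rule chord_sub[OF cy2 rr2]) (use j2 k3 l2 in auto)
  have len1: "length (take (Suc j) rcs) = Suc j" using jk lr by simp
  have len2: "length (take (Suc (?k - j)) rc2) = Suc (?k - j)" using j2 l2 by simp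
  have R1: "set (take j rrs @ [r]) \<subseteq> R" using sR r(1) lr set_take_subset[of j rrs] by auto
  have C1: "set (take (Suc j) rcs) \<subseteq> C" using sC lr set_take_subset[of "Suc j" rcs] by auto
  have R2: "set (take (?k - j) rr2 @ [r]) \<subseteq> R" using sR r(1) l2 set_take_subset[of "?k - j" rr2] by auto
  have C2: "set (take (Suc (?k - j)) rc2) \<subseteq> C" using sC l2 set_take_subset[of "Suc (?k - j)" rc2] by auto
  have "odd (Suc j) \<or> odd (Suc (?k - j))" using od j2 jk by presburger
  then show False
  proof
    assume "odd (Suc j)"
    then have "?k \<le> Suc j" using mn[OF sub1] len1 R1 C1 by simp
    then show False using j2 by simp
  next
    assume "odd (Suc (?k - j))"
    then have "?k \<le> Suc (?k - j)" using mn[OF sub2] len2 R2 C2 by simp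
    then show False using j2 jk by simp
  qed
qed

lemma rim_eq:
  "{K. maximal_clique (set cs) (GA R A) K \<and> card K = 2} =
   {{cs ! i, cs ! ((i + 1) mod length cs)} | i. i < length cs}"
proof (rule set_eqI, rule iffI)
  fix K assume "K \<in> {K. maximal_clique (set cs) (GA R A) K \<and> card K = 2}"
  then have K: "maximal_clique (set cs) (GA R A) K" "card K = 2" by auto
  obtain r where r: "r \<in> R" "K = {c \<in> set cs. A r c}" using mc_row[OF K(1)] by blast
  obtain u v where uv: "K = {u, v}" "u \<noteq> v" using K(2) by (meson card_2_iff)
  show "K \<in> {{cs ! i, cs ! ((i + 1) mod length cs)} | i. i < length cs}"
  proof (cases "consecutive cs u v")
    case True
    then obtain i where "i < length cs" "{u, v} = {cs!i, cs!(Suc i mod length cs)}"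
      unfolding consec_iff by blast
    then show ?thesis using uv by auto
  next
    case False
    then show ?thesis using chord_contra[OF r(1) _ uv(2)] r uv by simp
  qed
next
  fix K assume "K \<in> {{cs ! i, cs ! ((i + 1) mod length cs)} | i. i < length cs}"
  then obtain i where i: "i < length cs" "K = {cs!i, cs!(Suc i mod length cs)}" by auto
  show "K \<in> {K. maximal_clique (set cs) (GA R A) K \<and> card K = 2}"
    using rim_max[OF i(1)] rim_ne[OF i(1)] i(2) by simp
qed

end

context mc
begin

lemma no_hole_sub:
  assumes S: "S \<subset> inscribed_cliques (set cs) (GA R A)"
  shows "\<not> has_odd_hole (set cs) (delete_cliques (GA R A) S)"
proof
  let ?E = "GA R A" and ?E' = "delete_cliques (GA R A) S" and ?k = "length cs"
  assume "has_odd_hole (set cs) ?E'"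
  then obtain hs where hs: "set hs \<subseteq> set cs" "induced_cycle ?E' hs" "odd (length hs)" "5 \<le> length hs"
    unfolding has_odd_hole_def by blast
  let ?m = "length hs"
  have dh: "distinct hs" using hs(2) unfolding induced_cycle_def by simp
  have SK: "maximal_clique (set cs) ?E K" "card K \<noteq> 2" if "K \<in> S" for K
    using S that unfolding inscribed_cliques_def by auto
  have E'iff: "?E' x y \<longleftrightarrow> ?E x y \<and> \<not> (\<exists>K\<in>S. x \<in> K \<and> y \<in> K)" for x y
    unfolding delete_cliques_def by simp
  have hsC: "set hs \<subseteq> C" using hs(1) sC by (rule order_trans)
  have sm: "Suc l mod ?m < ?m" for l using hs(4) by (simp add: mod_lt3)
  have "\<forall>l<?m. \<exists>r. r \<in> R \<and> A r (hs!l) \<and> A r (hs!(Suc l mod ?m))"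
  proof (intro allI impI)
    fix l assume l: "l < ?m"
    have "?E' (hs!l) (hs!(Suc l mod ?m))" using induced_cycle_adj[OF hs(2) l sm] by simp
    then have "?E (hs!l) (hs!(Suc l mod ?m))" using E'iff by blast
    then show "\<exists>r. r \<in> R \<and> A r (hs!l) \<and> A r (hs!(Suc l mod ?m))" unfolding GA_def by blast
  qed
  then obtain \<rho> where \<rho>: "\<forall>l<?m. \<rho> l \<in> R \<and> A (\<rho> l) (hs!l) \<and> A (\<rho> l) (hs!(Suc l mod ?m))"
    by metis
  have keep: "?E' x w"
    if l: "l < ?m" and x: "x = hs!l \<or> x = hs!(Suc l mod ?m)" and w: "w \<in> set hs" "w \<noteq> x" "A (\<rho> l) w"
    for l x w
  proof -
    let ?a = "hs!l" and ?b = "hs!(Suc l mod ?m)"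
    have r: "\<rho> l \<in> R" "A (\<rho> l) ?a" "A (\<rho> l) ?b" using \<rho> l by auto
    have ab: "?E' ?a ?b" using induced_cycle_adj[OF hs(2) l sm] by simp
    have Axw: "A (\<rho> l) x" using x r by auto
    have "?E x w" unfolding GA_def using w(2) r(1) Axw w(3) by blast
    moreover have "\<not> (\<exists>K\<in>S. x \<in> K \<and> w \<in> K)"
    proof
      assume "\<exists>K\<in>S. x \<in> K \<and> w \<in> K"
      then obtain K where K: "K \<in> S" "x \<in> K" "w \<in> K" by blast
      have "K = {c \<in> set cs. A (\<rho> l) c}"
        by (rule K_eq_row[OF SK(1)[OF K(1)] K(2) K(3) w(2)[symmetric] r(1) Axw w(3)])
      moreover have "?a \<in> set cs" "?b \<in> set cs" using hs(1) l sm by (auto dest: nth_mem)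
      ultimately have "?a \<in> K" "?b \<in> K" using r by auto
      then show False using ab K(1) E'iff by blast
    qed
    ultimately show ?thesis using E'iff by blast
  qed
  have cyh: "cyc A (map \<rho> [0..<?m]) hs"
  proof (rule hole_cyc[OF hs(2)])
    show "4 \<le> ?m" using hs(4) by simp
    show "\<forall>l<?m. A (\<rho> l) (hs!l) \<and> A (\<rho> l) (hs!(Suc l mod ?m))" using \<rho> by blast
    show "\<forall>l<?m. \<forall>t<?m. A (\<rho> l) (hs!t) \<longrightarrow> t \<noteq> l \<longrightarrow> t \<noteq> Suc l mod ?m
               \<longrightarrow> ?E' (hs!l) (hs!t) \<and> ?E' (hs!(Suc l mod ?m)) (hs!t)"
    proof (intro allI impI conjI)
      fix l t assume lt: "l < ?m" "t < ?m" "A (\<rho> l) (hs!t)" "t \<noteq> l" "t \<noteq> Suc l mod ?m"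
      have "hs!t \<noteq> hs!l" "hs!t \<noteq> hs!(Suc l mod ?m)" using lt dh sm by (auto simp: nth_eq_iff_index_eq)
      moreover have "hs!t \<in> set hs" using lt(2) by simp
      ultimately show "?E' (hs!l) (hs!t)" "?E' (hs!(Suc l mod ?m)) (hs!t)"
        using keep[OF lt(1)] lt(3) by auto
    qed
  qed
  have "\<rho> ` {0..<?m} \<subseteq> R" using \<rho> by auto
  then have "?k \<le> ?m" using mn[OF cyh] hs(3) hsC by simp
  moreover have "?m \<le> ?k"
  proof -
    have "card (set hs) \<le> card (set cs)" using hs(1) by (simp add: card_mono)
    then show ?thesis using dh basic(4) by (simp add: distinct_card)
  qed
  ultimately have mk: "?m = ?k" by simp
  have hV: "set hs = set cs"
  proof (rule card_subset_eq)
    show "finite (set cs)" by simp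
    show "set hs \<subseteq> set cs" by (fact hs(1))
    show "card (set hs) = card (set cs)" using mk dh basic(4) by (simp add: distinct_card)
  qed
  obtain K0 where K0: "K0 \<in> inscribed_cliques (set cs) ?E" "K0 \<notin> S" using S by blast
  have K0m: "maximal_clique (set cs) ?E K0" "card K0 \<noteq> 2" using K0(1) unfolding inscribed_cliques_def by auto
  obtain r0 u v where r0: "r0 \<in> R" "K0 = {c \<in> set cs. A r0 c}" "u \<in> K0" "v \<in> K0" "u \<noteq> v"
    using mc_row[OF K0m(1)] by blast
  have uV: "u \<in> set cs" using r0 by blast
  obtain i where i: "i < ?k" "u = cs!i" using uV by (metis in_set_conv_nth)
  define p where "p = (i + ?k - 1) mod ?k"
  have p: "p < ?k" unfolding p_def using basic(2) by (simp add: mod_lt3)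
  have sp: "Suc p mod ?k = i" unfolding p_def pred_mod_eq[OF i(1)] using i(1) basic(2)
    by (cases "i = 0") (auto simp: mod_less)
  let ?n1 = "cs!(Suc i mod ?k)" and ?n2 = "cs!p"
  have c1: "consecutive cs u ?n1" unfolding consec_iff using i by blast
  have c2: "consecutive cs u ?n2" unfolding consec_iff using p sp i by (auto simp: insert_commute)
  have ncuv: "\<not> consecutive cs u v" by (rule insc_nc[OF K0m r0(3-5)])
  have nodel: "\<not> (\<exists>K\<in>S. u \<in> K \<and> y \<in> K)" if "consecutive cs u y" "u \<noteq> y" for y
  proof
    assume "\<exists>K\<in>S. u \<in> K \<and> y \<in> K"
    then obtain K where "K \<in> S" "u \<in> K" "y \<in> K" by blast
    then show False using insc_nc[OF SK(1) SK(2)] that by blast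
  qed
  have un1: "u \<noteq> ?n1" using rim_ne[OF i(1)] i(2) by simp
  have un2: "u \<noteq> ?n2" using rim_ne[OF p] sp i(2) by simp
  have e1: "?E' u ?n1" using E'iff rim_adj[OF i(1)] i(2) nodel[OF c1 un1] by simp
  have e2: "?E' u ?n2" using E'iff GA_sym[OF rim_adj[OF p]] sp i(2) nodel[OF c2 un2] by simp
  have e3: "?E' u v"
  proof -
    have "?E u v" unfolding GA_def using r0 by blast
    moreover have "\<not> (\<exists>K\<in>S. u \<in> K \<and> v \<in> K)"
    proof
      assume "\<exists>K\<in>S. u \<in> K \<and> v \<in> K"
      then obtain K where K: "K \<in> S" "u \<in> K" "v \<in> K" by blast
      have "K = K0" unfolding r0(2)
        by (rule K_eq_row[OF SK(1)[OF K(1)] K(2,3) r0(5) r0(1)]) (use r0 in auto)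
      then show False using K(1) K0(2) by simp
    qed
    ultimately show ?thesis using E'iff by blast
  qed
  have n12: "?n1 \<noteq> ?n2"
  proof -
    have "Suc i mod ?k \<noteq> p"
    proof
      assume "Suc i mod ?k = p"
      then have "Suc (Suc i mod ?k) mod ?k = i" using sp by simp
      then have "Suc (Suc i) mod ?k = i" by (simp add: mod_Suc_eq)
      show False
      proof (cases "Suc (Suc i) < ?k")
        case True
        then show False using \<open>Suc (Suc i) mod ?k = i\<close> by simp
      next
        case False
        then have "Suc (Suc i) = ?k \<or> Suc (Suc i) = ?k + 1" using i(1) by linarith
        then show False
        proof
          assume h: "Suc (Suc i) = ?k"
          then have "i = 0" using \<open>Suc (Suc i) mod ?k = i\<close> by simp
          then show False using h basic(2) by simp
        next
          assume h: "Suc (Suc i) = ?k + 1"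
          have "(?k + 1) mod ?k = 1 mod ?k" by (rule mod_add_self1)
          also have "\<dots> = 1" using basic(2) by (intro mod_less) linarith
          finally have "(?k + 1) mod ?k = 1" .
          then have "i = 1" using h \<open>Suc (Suc i) mod ?k = i\<close> by simp
          then show False using h basic(2) by simp
        qed
      qed
    qed
    then show ?thesis using basic(4) sucl p by (simp add: nth_eq_iff_index_eq)
  qed
  have vn1: "v \<noteq> ?n1" using ncuv c1 by auto
  have vn2: "v \<noteq> ?n2" using ncuv c2 by auto
  have inh: "x \<in> set hs" if "x \<in> set cs" for x using that hV by simp
  obtain a where a: "a < ?m" "u = hs!a" using inh[OF uV] by (metis in_set_conv_nth)
  obtain t1 where t1: "t1 < ?m" "?n1 = hs!t1" using inh[of ?n1] sucl by (metis in_set_conv_nth nth_mem)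
  obtain t2 where t2: "t2 < ?m" "?n2 = hs!t2" using inh[of ?n2] p by (metis in_set_conv_nth nth_mem)
  have vV: "v \<in> set cs" using r0 by blast
  obtain t3 where t3: "t3 < ?m" "v = hs!t3" using inh[OF vV] by (metis in_set_conv_nth)
  show False
  proof (rule hole_three_nbrs[OF hs(2) a(1) t1(1) t2(1) t3(1)])
    show "t1 \<noteq> t2" using n12 t1 t2 by auto
    show "t1 \<noteq> t3" using vn1 t1 t3 by auto
    show "t2 \<noteq> t3" using vn2 t2 t3 by auto
    show "?E' (hs!a) (hs!t1)" "?E' (hs!a) (hs!t2)" "?E' (hs!a) (hs!t3)"
      using e1 e2 e3 a t1 t2 t3 by auto
  qed
qed

lemma HOH:
  assumes df: "diamond_free C (GA R A)"
  shows "HOH_free_multisun (set cs) (GA R A)"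
  unfolding HOH_free_multisun_def
proof (intro conjI allI impI)
  show "multisun (set cs) (GA R A)" unfolding multisun_def multisun_rim_def
  proof (intro exI conjI allI impI)
    show "finite (set cs)" by simp
    show "odd (card (set cs))" using od basic(4) by (simp add: distinct_card)
    show "diamond_free (set cs) (GA R A)" using df sC unfolding diamond_free_def by blast
    show "distinct cs" "set cs = set cs" "3 \<le> length cs" using basic by auto
    show "{K. maximal_clique (set cs) (GA R A) K \<and> card K = 2} =
      {{cs ! i, cs ! ((i + 1) mod length cs)} | i. i < length cs}" by (rule rim_eq)
  next
    fix K assume "maximal_clique (set cs) (GA R A) K \<and> card K \<noteq> 2"
    then show "\<forall>u\<in>K. \<forall>v\<in>K. u \<noteq> v \<longrightarrow> \<not> consecutive cs u v" using insc_nc by blast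
  qed
next
  fix S assume "S \<subset> inscribed_cliques (set cs) (GA R A)"
  then show "\<not> has_odd_hole (set cs) (delete_cliques (GA R A) S)" by (rule no_hole_sub)
qed

end

lemma dir2:
  assumes finR: "finite R" and finC: "finite C" and lin: "linear_matrix R C A"
    and nc: "\<not> contains_C3 R C A" and df: "diamond_free C (GA R A)"
    and nh: "\<not> (\<exists>S\<subseteq>C. HOH_free_multisun S (GA R A))"
  shows "balanced R C A"
proof (rule ccontr)
  assume "\<not> balanced R C A"
  define P where "P n \<longleftrightarrow> (\<exists>rs cs. cyc A rs cs \<and> odd (length cs) \<and> set rs \<subseteq> R \<and> set cs \<subseteq> C \<and> length cs = n)"
    for n
  have "\<exists>n. P n" unfolding P_def using unbalanced_cyc[OF finR finC \<open>\<not> balanced R C A\<close>] by blast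
  then obtain n where n: "P n" "\<forall>m<n. \<not> P m" unfolding exists_least_iff[of P] by blast
  obtain rs cs where rc: "cyc A rs cs" "odd (length cs)" "set rs \<subseteq> R" "set cs \<subseteq> C" "length cs = n"
    using n(1) unfolding P_def by blast
  have mn: "length cs \<le> length cs'"
    if "cyc A rs' cs'" "odd (length cs')" "set rs' \<subseteq> R" "set cs' \<subseteq> C" for rs' cs'
  proof (rule ccontr)
    assume "\<not> length cs \<le> length cs'"
    then have "length cs' < n" using rc(5) by simp
    moreover have "P (length cs')" unfolding P_def using that by blast
    ultimately show False using n(2) by blast
  qed
  interpret mc R C A rs cs
    by (unfold_locales) (use finR finC lin nc rc mn in auto)
  have "HOH_free_multisun (set cs) (GA R A)" by (rule HOH[OF df])
  then show False using nh rc(4) by blast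
qed

theorem proposition4:
  fixes R :: "'r set" and C :: "'c set" and A :: "'r \<Rightarrow> 'c \<Rightarrow> bool"
  assumes "finite R" and "finite C" and "linear_matrix R C A"
  shows "balanced R C A \<longleftrightarrow>
           (\<not> contains_C3 R C A \<and>
            diamond_free C (GA R A) \<and>
            \<not> has_odd_hole C (GA R A) \<and>
            \<not> (\<exists>S\<subseteq>C. HOH_free_multisun S (GA R A)))"
proof
  assume "balanced R C A"
  then show "\<not> contains_C3 R C A \<and> diamond_free C (GA R A) \<and> \<not> has_odd_hole C (GA R A) \<and>
            \<not> (\<exists>S\<subseteq>C. HOH_free_multisun S (GA R A))" using dir1[OF assms(3)] by blast
next
  assume h: "\<not> contains_C3 R C A \<and> diamond_free C (GA R A) \<and> \<not> has_odd_hole C (GA R A) \<and>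
            \<not> (\<exists>S\<subseteq>C. HOH_free_multisun S (GA R A))"
  show "balanced R C A"
    by (rule dir2[OF assms]) (use h in blast)+
qed

end
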